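(* Let $\zeta:\mathbb{R}\to[0,\infty)$ be continuous and decreasing with $\int_0^\infty\zeta(t)\,dt<+\infty$. If $u_k,u\in\mathrm{Conv}_{\mathrm{coe}}(\mathbb{R}^n)$ are such that $u_k$ epi-converges to $u$, then $\delta^H_\zeta(u_k,u)\to 0$ as $k\to\infty$.
   Context: $\mathrm{Conv}_{\mathrm{coe}}(\mathbb{R}^n)$ is the set of proper, lower semicontinuous, convex, coercive functions $u:\mathbb{R}^n\to\mathbb{R}\cup\{+\infty\}$. With $\mathcal{K}^n$ the non-empty compact convex sets and $d_H$ the Hausdorff metric, define $\hat d_H$ on $\mathcal{K}^n\cup\{\emptyset\}$ by $\hat d_H(K,L)=d_H(K,L)$ if both non-empty, $\hat d_H(\emptyset,\emptyset)=0$, and $\hat d_H(K,\emptyset)=\hat d_H(\emptyset,K)=\max\{1,d_H(K,\{0\})\}$ for $K\ne\emptyset$. Then $\delta^H_\zeta(u,v)=\int_0^{\infty}\hat d_H(\{\zeta\circ u\ge s\},\{\zeta\circ v\ge s\})\,ds$, where $\{\zeta\circ u\ge s\}=\{x:\zeta(u(x))\ge s\}$ and $\zeta(+\infty):=0$. Epi-convergence $u_k\to u$: for every $x$, $\liminf_k u_k(x_k)\ge u(x)$ for all $x_k\to x$ and $\limsup_k u_k(x_k)\le u(x)$ for some $x_k\to x$. *)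

theory Defs
  imports "HOL-Analysis.Analysis" "HOL-Library.Extended_Real"
begin

text \<open>Functions u : R^n -> R \<union> {+\<infinity>} are modelled as ereal-valued functions never taking -\<infinity>.\<close>

definition proper_fun :: "('a \<Rightarrow> ereal) \<Rightarrow> bool" where
  "proper_fun u \<longleftrightarrow> (\<exists>x. u x \<noteq> \<infinity>) \<and> (\<forall>x. u x \<noteq> -\<infinity>)"

definition lsc_fun :: "('a::topological_space \<Rightarrow> ereal) \<Rightarrow> bool" where
  "lsc_fun u \<longleftrightarrow> (\<forall>x xs. xs \<longlonglongrightarrow> x \<longrightarrow> u x \<le> liminf (\<lambda>k. u (xs k)))"

definition convex_fun :: "('a::real_vector \<Rightarrow> ereal) \<Rightarrow> bool" where
  "convex_fun u \<longleftrightarrow> convex {(x, r::real). u x \<le> ereal r}"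

definition coercive_fun :: "('a::real_normed_vector \<Rightarrow> ereal) \<Rightarrow> bool" where
  "coercive_fun u \<longleftrightarrow> (u \<longlongrightarrow> \<infinity>) at_infinity"

definition Conv_coe :: "('a::euclidean_space \<Rightarrow> ereal) set" where
  "Conv_coe = {u. proper_fun u \<and> lsc_fun u \<and> convex_fun u \<and> coercive_fun u}"

definition hausdorff_dist :: "'a::metric_space set \<Rightarrow> 'a set \<Rightarrow> real" where
  "hausdorff_dist K L = max (SUP x\<in>K. infdist x L) (SUP y\<in>L. infdist y K)"

definition hat_dH :: "'a::real_normed_vector set \<Rightarrow> 'a set \<Rightarrow> real" where
  "hat_dH K L =
     (if K = {} \<and> L = {} then 0
      else if L = {} then max 1 (hausdorff_dist K {0})
      else if K = {} then max 1 (hausdorff_dist L {0})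
      else hausdorff_dist K L)"

definition zeta_ext :: "(real \<Rightarrow> real) \<Rightarrow> ereal \<Rightarrow> real" where
  "zeta_ext \<zeta> t = (if t = \<infinity> then 0 else \<zeta> (real_of_ereal t))"

definition superlevel :: "(real \<Rightarrow> real) \<Rightarrow> ('a \<Rightarrow> ereal) \<Rightarrow> real \<Rightarrow> 'a set" where
  "superlevel \<zeta> u s = {x. zeta_ext \<zeta> (u x) \<ge> s}"

definition delta_H :: "(real \<Rightarrow> real) \<Rightarrow> ('a::euclidean_space \<Rightarrow> ereal) \<Rightarrow> ('a \<Rightarrow> ereal) \<Rightarrow> ennreal" where
  "delta_H \<zeta> u v =
     (\<integral>\<^sup>+ s. ennreal (hat_dH (superlevel \<zeta> u s) (superlevel \<zeta> v s)) * indicator {0..} s \<partial>lborel)"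

definition epi_converges :: "(nat \<Rightarrow> 'a::topological_space \<Rightarrow> ereal) \<Rightarrow> ('a \<Rightarrow> ereal) \<Rightarrow> bool" where
  "epi_converges us u \<longleftrightarrow>
     (\<forall>x. (\<forall>xs. xs \<longlonglongrightarrow> x \<longrightarrow> u x \<le> liminf (\<lambda>k. us k (xs k))) \<and>
          (\<exists>xs. xs \<longlonglongrightarrow> x \<and> limsup (\<lambda>k. us k (xs k)) \<le> u x))"

end

theory Submission
  imports Defs
begin
lemma dc_nonmeas:
  fixes f :: "nat \<Rightarrow> 'b \<Rightarrow> ennreal"
  assumes Gm: "G \<in> borel_measurable M" and Gi: "(\<integral>\<^sup>+x. G x \<partial>M) < \<infinity>"
    and dom: "\<And>k. k \<ge> N \<Longrightarrow> AE x in M. f k x \<le> G x"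
    and lim: "AE x in M. (\<lambda>k. f k x) \<longlonglongrightarrow> 0"
  shows "(\<lambda>k. integral\<^sup>N M (f k)) \<longlonglongrightarrow> 0"
proof (rule ccontr)
  assume "\<not> ?thesis"
  then obtain e :: ennreal where e0: "e > 0" and fr: "\<exists>\<^sub>F k in sequentially. \<not> integral\<^sup>N M (f k) < e"
    unfolding order_tendsto_iff by (auto simp: not_eventually)
  obtain d where d0: "0 < d" and de: "d < e" using dense[OF e0] by blast
  have "infinite {k. N \<le> k \<and> \<not> integral\<^sup>N M (f k) < e}"
  proof -
    have "\<forall>n. \<exists>k\<ge>n. N \<le> k \<and> \<not> integral\<^sup>N M (f k) < e"
      using fr unfolding frequently_sequentially by (metis le_trans nat_le_linear)
    then show ?thesis by (simp add: infinite_nat_iff_unbounded_le)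
  qed
  from infinite_enumerate[OF this] obtain r :: "nat \<Rightarrow> nat" where r: "strict_mono r" "\<And>j. N \<le> r j" "\<And>j. integral\<^sup>N M (f (r j)) \<ge> e"
    by (auto simp: not_less)
  have "\<exists>g. simple_function M g \<and> g \<le> f (r j) \<and> d < integral\<^sup>S M g" for j
  proof -
    have "d < integral\<^sup>N M (f (r j))" using de r(3)[of j] by auto
    then show ?thesis unfolding nn_integral_def by (auto simp: less_SUP_iff)
  qed
  then obtain g where g: "\<And>j. simple_function M (g j)" "\<And>j. g j \<le> f (r j)" "\<And>j. d < integral\<^sup>S M (g j)"
    by metis
  have gint: "integral\<^sup>N M (g j) = integral\<^sup>S M (g j)" for j
    using g(1) by (simp add: nn_integral_eq_simple_integral)
  have gm: "g j \<in> borel_measurable M" for j using g(1) by (rule borel_measurable_simple_function)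
  have "limsup (\<lambda>j. integral\<^sup>N M (g j)) \<le> (\<integral>\<^sup>+ x. limsup (\<lambda>j. g j x) \<partial>M)"
  proof (rule nn_integral_limsup[OF gm Gm _ Gi])
    fix j show "AE x in M. g j x \<le> G x"
      using dom[OF r(2)[of j]]
    proof eventually_elim
      case (elim x) then show ?case using g(2)[of j] by (auto simp: le_fun_def intro: order_trans)
    qed
  qed
  also have "\<dots> = (\<integral>\<^sup>+ x. 0 \<partial>M)"
  proof (rule nn_integral_cong_AE)
    show "AE x in M. limsup (\<lambda>j. g j x) = 0"
      using lim
    proof eventually_elim
      case (elim x)
      have "(\<lambda>j. f (r j) x) \<longlonglongrightarrow> 0" using LIMSEQ_subseq_LIMSEQ[OF elim r(1)] by (simp add: o_def)
      then have "limsup (\<lambda>j. f (r j) x) = 0" by (simp add: lim_imp_Limsup)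
      moreover have "limsup (\<lambda>j. g j x) \<le> limsup (\<lambda>j. f (r j) x)"
        by (rule Limsup_mono) (use g(2) in \<open>auto simp: le_fun_def\<close>)
      ultimately show ?case by simp
    qed
  qed
  finally have l0: "limsup (\<lambda>j. integral\<^sup>N M (g j)) \<le> 0" by simp
  have "d \<le> liminf (\<lambda>j. integral\<^sup>N M (g j))"
    by (rule Liminf_bounded) (use g(3) gint in \<open>auto intro!: always_eventually less_imp_le\<close>)
  also have "\<dots> \<le> limsup (\<lambda>j. integral\<^sup>N M (g j))" by (rule Liminf_le_Limsup) simp
  finally show False using l0 d0 by simp
qed

lemma cc_not_minf: "v \<in> Conv_coe \<Longrightarrow> v x \<noteq> -\<infinity>"
  by (auto simp: Conv_coe_def proper_fun_def)

lemma cc_bounded: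
  assumes "v \<in> Conv_coe"
  shows "\<exists>R. \<forall>x. v x \<le> ereal t \<longrightarrow> norm x \<le> R"
proof -
  have "(v \<longlongrightarrow> \<infinity>) at_infinity" using assms by (auto simp: Conv_coe_def coercive_fun_def)
  then have "eventually (\<lambda>x. ereal t < v x) at_infinity" by (simp add: tendsto_PInfty)
  then obtain b where b: "\<And>x. b \<le> norm x \<Longrightarrow> ereal t < v x" by (auto simp: eventually_at_infinity)
  show ?thesis
  proof (intro exI allI impI)
    fix x assume "v x \<le> ereal t"
    then show "norm x \<le> b" using b[of x] by force
  qed
qed

lemma cc_convex:
  assumes "v \<in> Conv_coe" "v x \<le> ereal a" "v y \<le> ereal b" "0 \<le> l" "l \<le> 1"
  shows "v ((1 - l) *\<^sub>R x + l *\<^sub>R y) \<le> ereal ((1 - l) * a + l * b)"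
proof -
  have c: "convex {(x, r::real). v x \<le> ereal r}" using assms(1) by (auto simp: Conv_coe_def convex_fun_def)
  have "(1 - l) *\<^sub>R (x, a) + l *\<^sub>R (y, b) \<in> {(x, r::real). v x \<le> ereal r}"
    using assms(2-5) by (intro convexD[OF c]) auto
  then show ?thesis by simp
qed

lemma cc_lsc:
  assumes "v \<in> Conv_coe" "xs \<longlonglongrightarrow> x"
  shows "v x \<le> liminf (\<lambda>k. v (xs k))"
  using assms by (auto simp: Conv_coe_def lsc_fun_def)

lemma cc_min:
  assumes "v \<in> Conv_coe"
  shows "\<exists>x0 m. v x0 = ereal m \<and> (\<forall>x. ereal m \<le> v x)"
proof -
  obtain p where p: "v p \<noteq> \<infinity>" using assms by (auto simp: Conv_coe_def proper_fun_def)
  have "v p \<noteq> -\<infinity>" using cc_not_minf[OF assms] .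
  then obtain t where t: "v p = ereal t" using p by (cases "v p") auto
  obtain R where R: "\<And>x. v x \<le> ereal t \<Longrightarrow> norm x \<le> R" using cc_bounded[OF assms, of t] by blast
  define K where "K = cball (0::'a) R"
  have pK: "p \<in> K" using R[of p] t by (simp add: K_def)
  obtain xs where xs: "\<And>n. xs n \<in> v ` K" "xs \<longlonglongrightarrow> Inf (v ` K)"
    using Inf_as_limit[of "v ` K"] pK by blast
  have "\<forall>n. \<exists>y. y \<in> K \<and> xs n = v y" using xs(1) by blast
  then obtain ys where ys: "\<And>n. ys n \<in> K" "\<And>n. xs n = v (ys n)" by metis
  have "seq_compact K" unfolding K_def by (intro compact_imp_seq_compact compact_cball)
  then obtain w s where w: "w \<in> K" "strict_mono s" "(ys \<circ> s) \<longlonglongrightarrow> w"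
    using seq_compactE[of K ys] ys(1) by blast
  have "v w \<le> liminf (\<lambda>n. v ((ys \<circ> s) n))" by (rule cc_lsc[OF assms w(3)])
  also have "(\<lambda>n. v ((ys \<circ> s) n)) = xs \<circ> s" using ys(2) by (auto simp: o_def)
  also have "liminf (xs \<circ> s) = Inf (v ` K)"
    using LIMSEQ_subseq_LIMSEQ[OF xs(2) w(2)] by (simp add: lim_imp_Liminf)
  finally have wI: "v w \<le> Inf (v ` K)" .
  have wle: "v w \<le> v x" for x
  proof (cases "x \<in> K")
    case True then show ?thesis using wI by (meson INF_lower order_trans)
  next
    case False
    then have "\<not> v x \<le> ereal t" using R[of x] by (auto simp: K_def)
    moreover have "v w \<le> v p" using wI pK by (meson INF_lower order_trans)
    ultimately show ?thesis using t by auto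
  qed
  have "v w \<noteq> \<infinity>" using wle[of p] p by auto
  moreover have "v w \<noteq> -\<infinity>" using cc_not_minf[OF assms] .
  ultimately obtain m where "v w = ereal m" by (cases "v w") auto
  then show ?thesis using wle by metis
qed

locale epi_set =
  fixes us :: "nat \<Rightarrow> 'a::euclidean_space \<Rightarrow> ereal" and u :: "'a \<Rightarrow> ereal"
  assumes us_cc: "\<And>k. us k \<in> Conv_coe" and u_cc: "u \<in> Conv_coe"
    and epi: "epi_converges us u"
begin

lemma recov: "\<exists>xs. xs \<longlonglongrightarrow> x \<and> limsup (\<lambda>k. us k (xs k)) \<le> u x"
  using epi by (auto simp: epi_converges_def)

lemma recov_lt:
  assumes "u x < ereal c" "e > 0"
  shows "\<exists>xs. xs \<longlonglongrightarrow> x \<and> eventually (\<lambda>k. us k (xs k) < ereal c \<and> dist (xs k) x < e) sequentially"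
proof -
  obtain xs where xs: "xs \<longlonglongrightarrow> x" "limsup (\<lambda>k. us k (xs k)) \<le> u x" using recov by blast
  have "eventually (\<lambda>k. us k (xs k) < ereal c) sequentially"
    using xs(2) assms(1) by (intro Limsup_lessD) auto
  moreover have "eventually (\<lambda>k. dist (xs k) x < e) sequentially"
    using xs(1) assms(2) by (simp add: tendsto_iff)
  ultimately have "eventually (\<lambda>k. us k (xs k) < ereal c \<and> dist (xs k) x < e) sequentially"
    by (rule eventually_conj)
  then show ?thesis using xs(1) by (intro exI[of _ xs] conjI)
qed

lemma epi_subseq:
  assumes r: "strict_mono r" and y: "y \<longlonglongrightarrow> x"
  shows "u x \<le> liminf (\<lambda>j. us (r j) (y j))"
proof -
  define z where "z k = (if k \<in> range r then y (inv r k) else x)" for k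
  have invr: "inv r (r j) = j" for j using strict_mono_imp_inj_on[OF r] by (simp add: inv_f_f)
  have "z \<longlonglongrightarrow> x"
  proof (rule tendstoI)
    fix e :: real assume e: "e > 0"
    then obtain J where J: "\<And>j. j \<ge> J \<Longrightarrow> dist (y j) x < e"
      using y by (auto simp: tendsto_iff eventually_sequentially)
    show "eventually (\<lambda>k. dist (z k) x < e) sequentially"
      unfolding eventually_sequentially
    proof (intro exI allI impI)
      fix k assume k: "r J \<le> k"
      show "dist (z k) x < e"
      proof (cases "k \<in> range r")
        case True
        then obtain j where j: "k = r j" by auto
        then have "J \<le> j" using k strict_mono_less_eq[OF r] by auto
        then show ?thesis using J j invr by (simp add: z_def)
      qed (use e in \<open>simp add: z_def\<close>)
    qed
  qed
  then have "u x \<le> liminf (\<lambda>k. us k (z k))" using epi by (auto simp: epi_converges_def)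
  also have "\<dots> \<le> liminf ((\<lambda>k. us k (z k)) \<circ> r)" by (rule liminf_subseq_mono[OF r])
  also have "((\<lambda>k. us k (z k)) \<circ> r) = (\<lambda>j. us (r j) (y j))" by (auto simp: z_def invr o_def)
  finally show ?thesis .
qed

lemma compact_lemma:
  assumes fr: "\<And>N. \<exists>k\<ge>N. \<exists>x. P k x \<and> norm x \<le> B \<and> us k x \<le> ereal t"
  shows "\<exists>r y w. strict_mono r \<and> y \<longlonglongrightarrow> w \<and> (\<forall>j. P (r j) (y j)) \<and> u w \<le> ereal t"
proof -
  have "infinite {k. \<exists>x. P k x \<and> norm x \<le> B \<and> us k x \<le> ereal t}"
    using fr by (simp add: infinite_nat_iff_unbounded_le)
  from infinite_enumerate[OF this] obtain r0 :: "nat \<Rightarrow> nat" where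
    r0: "strict_mono r0" "\<And>j. \<exists>x. P (r0 j) x \<and> norm x \<le> B \<and> us (r0 j) x \<le> ereal t" by blast
  then obtain y0 where y0: "\<And>j. P (r0 j) (y0 j)" "\<And>j. norm (y0 j) \<le> B" "\<And>j. us (r0 j) (y0 j) \<le> ereal t"
    by metis
  have sc: "seq_compact (cball (0::'a) B)" by (intro compact_imp_seq_compact compact_cball)
  have "\<forall>n. y0 n \<in> cball 0 B" using y0(2) by simp
  from seq_compactE[OF sc this] obtain w s where w: "strict_mono s" "(y0 \<circ> s) \<longlonglongrightarrow> w"
    by metis
  have sm: "strict_mono (r0 \<circ> s)" using r0(1) w(1) by (rule strict_mono_o)
  have "u w \<le> liminf (\<lambda>j. us ((r0 \<circ> s) j) ((y0 \<circ> s) j))" by (rule epi_subseq[OF sm w(2)])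
  also have "\<dots> \<le> limsup (\<lambda>j. us ((r0 \<circ> s) j) ((y0 \<circ> s) j))" by (rule Liminf_le_Limsup) simp
  also have "\<dots> \<le> ereal t" by (rule Limsup_bounded) (use y0(3) in \<open>auto intro!: always_eventually\<close>)
  finally have uw: "u w \<le> ereal t" .
  have Pj: "\<forall>j. P ((r0 \<circ> s) j) ((y0 \<circ> s) j)" using y0(1) by simp
  show ?thesis
    apply (rule exI[of _ "r0 \<circ> s"], rule exI[of _ "y0 \<circ> s"], rule exI[of _ w])
    using sm w(2) uw Pj by (intro conjI)
qed

end

context epi_set
begin

context
  fixes x0 m
  assumes x0m: "u x0 = ereal m" and mmin: "\<And>x. ereal m \<le> u x"
begin

lemma bound1: "\<exists>R N. \<forall>k\<ge>N. \<forall>x. us k x \<le> ereal (m+2) \<longrightarrow> norm x \<le> R"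
proof (rule ccontr)
  assume nb: "\<not> ?thesis"
  obtain R0 where R0: "\<And>x. u x \<le> ereal (m+2) \<Longrightarrow> norm x \<le> R0" using cc_bounded[OF u_cc, of "m+2"] by blast
  define \<rho> where "\<rho> = max R0 0 + norm x0 + 1"
  have rho0: "\<rho> > 0" unfolding \<rho>_def by (simp add: add_nonneg_pos)
  obtain xs where xs: "xs \<longlonglongrightarrow> x0" "eventually (\<lambda>k. us k (xs k) < ereal (m+1) \<and> dist (xs k) x0 < 1) sequentially"
    using recov_lt[of x0 "m+1" 1] x0m by auto
  then obtain N0 where N0: "\<And>k. k \<ge> N0 \<Longrightarrow> us k (xs k) < ereal (m+1) \<and> dist (xs k) x0 < 1"
    by (auto simp: eventually_sequentially)
  define B where "B = norm x0 + 1 + \<rho>"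
  have "\<exists>k\<ge>N. \<exists>w. dist w (xs k) = \<rho> \<and> norm w \<le> B \<and> us k w \<le> ereal (m+2)" for N
  proof -
    from nb obtain k x where k: "k \<ge> max N N0" and x: "us k x \<le> ereal (m+2)" "\<not> norm x \<le> B"
      by blast
    define y where "y = xs k"
    have y: "us k y < ereal (m+1)" "dist y x0 < 1" using N0[of k] k by (auto simp: y_def)
    have ny: "norm y < norm x0 + 1" using y(2) norm_triangle_ineq2[of y x0]
      by (simp add: dist_norm)
    define d where "d = norm (x - y)"
    have dgt: "d > \<rho>" using x(2) ny norm_triangle_ineq2[of x y] unfolding d_def B_def by linarith
    define l where "l = \<rho> / d"
    have l01: "0 \<le> l" "l \<le> 1" using dgt rho0 by (auto simp: l_def)
    define w where "w = (1 - l) *\<^sub>R y + l *\<^sub>R x"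
    have "us k y \<le> ereal (m+2)" using order.trans[OF less_imp_le[OF y(1)], of "ereal (m+2)"] by simp
    from cc_convex[OF us_cc this x(1) l01] have uw: "us k w \<le> ereal (m+2)"
      by (simp add: w_def algebra_simps)
    have "w - y = l *\<^sub>R (x - y)" by (simp add: w_def algebra_simps)
    then have dw: "dist w y = \<rho>" using dgt rho0 l01 by (auto simp: dist_norm l_def d_def)
    have "norm w \<le> norm y + dist w y" using norm_triangle_ineq2[of w y] by (simp add: dist_norm)
    then have "norm w \<le> B" using ny dw unfolding B_def by linarith
    then show ?thesis using k uw dw by (intro exI[of _ k]) (auto simp: y_def)
  qed
  from compact_lemma[OF this] obtain r ys w where
    rw: "strict_mono r" "ys \<longlonglongrightarrow> w" "\<forall>j. dist (ys j) (xs (r j)) = \<rho>" "u w \<le> ereal (m+2)" by blast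
  have "(xs \<circ> r) \<longlonglongrightarrow> x0" using LIMSEQ_subseq_LIMSEQ[OF xs(1) rw(1)] .
  then have "(\<lambda>j. dist (ys j) (xs (r j))) \<longlonglongrightarrow> dist w x0"
    using rw(2) by (intro tendsto_dist) (auto simp: o_def)
  moreover have "(\<lambda>j. dist (ys j) (xs (r j))) \<longlonglongrightarrow> \<rho>" using rw(3) by simp
  ultimately have "dist w x0 = \<rho>" using LIMSEQ_unique by blast
  moreover have "norm w \<le> R0" using R0 rw(4) by blast
  moreover have "dist w x0 \<le> norm w + norm x0" by (simp add: dist_norm norm_triangle_ineq4)
  ultimately show False unfolding \<rho>_def by linarith
qed

end
end

context epi_set
begin

context
  fixes x0 m
  assumes x0m: "u x0 = ereal m" and mmin: "\<And>x. ereal m \<le> u x"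
begin

lemma empty_below:
  assumes tm: "t < m"
  shows "eventually (\<lambda>k. \<forall>x. \<not> us k x \<le> ereal t) sequentially"
proof (rule ccontr)
  assume ne: "\<not> ?thesis"
  obtain R N where RN: "\<And>k x. k \<ge> N \<Longrightarrow> us k x \<le> ereal (m+2) \<Longrightarrow> norm x \<le> R"
    using bound1[OF x0m mmin] by blast
  have "\<exists>k\<ge>N'. \<exists>x. True \<and> norm x \<le> R \<and> us k x \<le> ereal t" for N'
  proof -
    from ne obtain k x where k: "k \<ge> max N' N" "us k x \<le> ereal t"
      unfolding eventually_sequentially by blast
    have "us k x \<le> ereal (m+2)" using k(2) tm order.trans[OF k(2), of "ereal (m+2)"] by simp
    then show ?thesis using k RN[of k x] by auto
  qed
  from compact_lemma[OF this] obtain w where "u w \<le> ereal t" by blast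
  then show False using mmin[of w] tm by (metis ereal_less_eq(3) order.trans not_le)
qed

lemma growth:
  "\<exists>N C. C \<ge> 0 \<and> (\<forall>k\<ge>N. \<forall>x t. us k x \<le> ereal t \<longrightarrow> norm x \<le> C * (1 + \<bar>t\<bar>) \<and> m - 1 < t)"
proof -
  obtain R1 N1 where RN: "\<And>k x. k \<ge> N1 \<Longrightarrow> us k x \<le> ereal (m+2) \<Longrightarrow> norm x \<le> R1"
    using bound1[OF x0m mmin] by blast
  obtain xs where xs: "xs \<longlonglongrightarrow> x0" "eventually (\<lambda>k. us k (xs k) < ereal (m+1) \<and> dist (xs k) x0 < 1) sequentially"
    using recov_lt[of x0 "m+1" 1] x0m by auto
  then obtain N0 where N0: "\<And>k. k \<ge> N0 \<Longrightarrow> us k (xs k) < ereal (m+1) \<and> dist (xs k) x0 < 1"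
    by (auto simp: eventually_sequentially)
  obtain N3 where N3: "\<And>k x. k \<ge> N3 \<Longrightarrow> \<not> us k x \<le> ereal (m - 1)"
    using empty_below[of "m - 1"] by (auto simp: eventually_sequentially)
  define K where "K = max R1 0 + norm x0 + 1"
  define C where "C = K * (\<bar>m\<bar> + 2)"
  have K0: "K \<ge> 1" by (simp add: K_def)
  have C0: "C \<ge> 0" using K0 by (simp add: C_def)
  have main: "norm x \<le> C * (1 + \<bar>t\<bar>) \<and> m - 1 < t"
    if k: "k \<ge> max N1 (max N0 N3)" and x: "us k x \<le> ereal t" for k x t
  proof -
    have mt: "m - 1 < t"
    proof (rule ccontr)
      assume "\<not> m - 1 < t"
      then have "us k x \<le> ereal (m - 1)" using x order.trans[OF x, of "ereal (m - 1)"] by simp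
      then show False using N3[of k x] k by simp
    qed
    have CK: "K \<le> C * (1 + \<bar>t\<bar>)"
    proof -
      have "K * 1 \<le> K * ((\<bar>m\<bar> + 2) * (1 + \<bar>t\<bar>))"
        using K0 mult_mono[of 1 "\<bar>m\<bar>+2" 1 "1+\<bar>t\<bar>"] by (intro mult_left_mono) auto
      then show ?thesis by (simp add: C_def mult.assoc)
    qed
    show ?thesis
    proof (cases "t \<le> m + 2")
      case True
      then have "us k x \<le> ereal (m+2)" using order.trans[OF x, of "ereal (m+2)"] by simp
      then have "norm x \<le> R1" using RN[of k x] k by simp
      moreover have "R1 \<le> K" unfolding K_def by (simp add: add_increasing2)
      ultimately show ?thesis using CK mt by linarith
    next
      case False
      define y where "y = xs k"
      have y: "us k y < ereal (m+1)" "dist y x0 < 1" using N0[of k] k by (auto simp: y_def)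
      have "us k y \<noteq> -\<infinity>" by (rule cc_not_minf[OF us_cc])
      then obtain a where a: "us k y = ereal a" using y(1) by (cases "us k y") auto
      have am: "m - 1 < a" using N3[of k y] k a by (auto simp: not_le)
      have am2: "a < m + 1" using y(1) a by simp
      define l where "l = (m + 2 - a) / (t - a)"
      have l01: "0 \<le> l" "l \<le> 1" "0 < l" using False am am2 by (auto simp: l_def)
      define w where "w = (1 - l) *\<^sub>R y + l *\<^sub>R x"
      have ya: "us k y \<le> ereal a" using a by simp
      from cc_convex[OF us_cc ya x l01(1,2)]
      have "us k w \<le> ereal ((1 - l) * a + l * t)" by (simp add: w_def)
      also have "(1 - l) * a + l * t = m + 2"
      proof -
        have ta: "t - a \<noteq> 0" using False am2 by simp
        have "(1 - l) * a + l * t = a + l * (t - a)" by (simp add: algebra_simps)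
        also have "l * (t - a) = m + 2 - a" using ta by (simp add: l_def)
        finally show ?thesis by simp
      qed
      finally have "norm w \<le> R1" using RN[of k w] k by simp
      have ny: "norm y \<le> norm x0 + 1" using y(2) norm_triangle_ineq2[of y x0] by (simp add: dist_norm)
      have "w - y = l *\<^sub>R (x - y)" by (simp add: w_def algebra_simps)
      then have "norm (w - y) = l * norm (x - y)" using l01 by simp
      moreover have "norm (w - y) \<le> K" using \<open>norm w \<le> R1\<close> ny norm_triangle_ineq4[of w y]
        unfolding K_def by linarith
      ultimately have "l * norm (x - y) \<le> K" by simp
      then have "norm (x - y) \<le> K / l" using l01 by (simp add: field_simps)
      also have "K / l = K * (t - a) / (m + 2 - a)" using False am2 by (simp add: l_def)
      also have "\<dots> \<le> K * (t - a)"
      proof -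
        have d1: "1 \<le> m + 2 - a" using am2 by simp
        have X0: "0 \<le> K * (t - a)" using K0 False am2 by simp
        show ?thesis by (subst divide_le_eq) (use mult_left_mono[OF d1 X0] d1 in auto)
      qed
      finally have nxy: "norm (x - y) \<le> K * (t - a)" .
      have "norm x \<le> norm y + norm (x - y)" using norm_triangle_ineq2[of x y] by simp
      also have "\<dots> \<le> K + K * (t - a)" using ny nxy unfolding K_def by simp
      also have "\<dots> \<le> K * (1 + \<bar>t\<bar> + \<bar>m\<bar> + 1)"
      proof -
        have "1 + (t - a) \<le> 1 + \<bar>t\<bar> + \<bar>m\<bar> + 1" using am abs_ge_self[of t] abs_ge_minus_self[of m] by linarith
        then have "K * (1 + (t - a)) \<le> K * (1 + \<bar>t\<bar> + \<bar>m\<bar> + 1)" using K0 by (intro mult_left_mono) auto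
        then show ?thesis by (simp add: algebra_simps)
      qed
      also have "\<dots> \<le> C * (1 + \<bar>t\<bar>)"
      proof -
        have "1 + \<bar>t\<bar> + \<bar>m\<bar> + 1 \<le> (\<bar>m\<bar> + 2) * (1 + \<bar>t\<bar>)" 
        proof -
          have e: "(\<bar>m\<bar> + 2) * (1 + \<bar>t\<bar>) = \<bar>m\<bar> + \<bar>m\<bar> * \<bar>t\<bar> + 2 + 2 * \<bar>t\<bar>" by (simp add: algebra_simps)
          have "0 \<le> \<bar>m\<bar> * \<bar>t\<bar>" by simp
          then show ?thesis unfolding e by linarith
        qed
        then show ?thesis using K0 by (simp add: C_def mult.assoc mult_left_mono)
      qed
      finally show ?thesis using mt by simp
    qed
  qed
  show ?thesis using C0 main by blast
qed

end
end

lemma cc_sublevel_compact: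
  assumes "v \<in> Conv_coe"
  shows "compact {x. v x \<le> ereal t}"
proof -
  obtain R where R: "\<And>x. v x \<le> ereal t \<Longrightarrow> norm x \<le> R" using cc_bounded[OF assms] by blast
  have "bounded {x. v x \<le> ereal t}" unfolding bounded_iff using R by blast
  moreover have "closed {x. v x \<le> ereal t}"
    unfolding closed_sequential_limits
  proof (intro allI impI, elim conjE)
    fix xs l assume xs: "\<forall>n. xs n \<in> {x. v x \<le> ereal t}" "xs \<longlonglongrightarrow> l"
    have "v l \<le> liminf (\<lambda>n. v (xs n))" by (rule cc_lsc[OF assms xs(2)])
    also have "\<dots> \<le> limsup (\<lambda>n. v (xs n))" by (rule Liminf_le_Limsup) simp
    also have "\<dots> \<le> ereal t" by (rule Limsup_bounded) (use xs(1) in \<open>auto intro!: always_eventually\<close>)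
    finally show "l \<in> {x. v x \<le> ereal t}" by simp
  qed
  ultimately show ?thesis by (simp add: compact_eq_bounded_closed)
qed

context epi_set
begin

context
  fixes x0 m
  assumes x0m: "u x0 = ereal m" and mmin: "\<And>x. ereal m \<le> u x"
begin

lemma partA:
  assumes e: "e > 0"
  shows "eventually (\<lambda>k. \<forall>x. us k x \<le> ereal t \<longrightarrow> (\<exists>y. u y \<le> ereal t \<and> dist x y < e)) sequentially"
proof (rule ccontr)
  assume ne: "\<not> ?thesis"
  obtain N C where NC: "\<And>k x t. k \<ge> N \<Longrightarrow> us k x \<le> ereal t \<Longrightarrow> norm x \<le> C * (1 + \<bar>t\<bar>)"
    using growth[OF x0m mmin] by blast
  have "\<exists>k\<ge>N'. \<exists>x. (\<forall>y. u y \<le> ereal t \<longrightarrow> e \<le> dist x y) \<and> norm x \<le> C * (1 + \<bar>t\<bar>) \<and> us k x \<le> ereal t" for N'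
  proof -
    from ne obtain k x where k: "k \<ge> max N' N" "us k x \<le> ereal t" "\<forall>y. u y \<le> ereal t \<longrightarrow> \<not> dist x y < e"
      unfolding eventually_sequentially by blast
    then show ?thesis using NC[of k x t] by (intro exI[of _ k]) (auto simp: not_less)
  qed
  from compact_lemma[OF this] obtain r ys w where
    rw: "ys \<longlonglongrightarrow> w" "\<forall>j. \<forall>y. u y \<le> ereal t \<longrightarrow> e \<le> dist (ys j) y" "u w \<le> ereal t" by blast
  have "\<forall>j. e \<le> dist (ys j) w" using rw(2,3) by blast
  moreover have "eventually (\<lambda>j. dist (ys j) w < e) sequentially" using rw(1) e by (simp add: tendsto_iff)
  ultimately show False by (auto simp: eventually_sequentially not_le[symmetric])
qed

lemma partB:
  assumes e: "e > 0" and mt: "m < t"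
  shows "eventually (\<lambda>k. \<forall>y. u y \<le> ereal t \<longrightarrow> (\<exists>x. us k x \<le> ereal t \<and> dist x y < e)) sequentially"
proof -
  define K where "K = {y. u y \<le> ereal t}"
  have cK: "compact K" unfolding K_def by (rule cc_sublevel_compact[OF u_cc])
  have cov: "K \<subseteq> (\<Union>q\<in>{q. u q < ereal t}. ball q (e/2))"
  proof
    fix y assume y: "y \<in> K"
    then have "u y \<noteq> \<infinity>" by (auto simp: K_def)
    moreover have "u y \<noteq> -\<infinity>" by (rule cc_not_minf[OF u_cc])
    ultimately obtain ty where ty: "u y = ereal ty" by (cases "u y") auto
    have tyt: "ty \<le> t" using y ty by (simp add: K_def)
    define l where "l = min (1/2) (e / (2 * (norm (y - x0) + 1)))"
    have "0 < e / (2 * (norm (y - x0) + 1))" using e by (intro divide_pos_pos) (auto intro: add_nonneg_pos)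
    then have l0: "0 < l" "l \<le> 1" using e by (auto simp: l_def)
    define q where "q = (1 - l) *\<^sub>R y + l *\<^sub>R x0"
    have "u q \<le> ereal ((1 - l) * ty + l * m)"
      unfolding q_def using ty x0m l0 by (intro cc_convex[OF u_cc]) auto
    also have "(1 - l) * ty + l * m < t"
    proof -
      have "(1 - l) * ty \<le> (1 - l) * t" using tyt l0 by (intro mult_left_mono) auto
      moreover have "l * m < l * t" using l0 mt by simp
      ultimately show ?thesis by (simp add: algebra_simps)
    qed
    finally have uq: "u q < ereal t" by simp
    have "q - y = l *\<^sub>R (x0 - y)" by (simp add: q_def algebra_simps)
    then have "dist y q = l * norm (y - x0)" using l0 by (simp add: dist_norm norm_minus_commute)
    also have "\<dots> \<le> (e / (2 * (norm (y - x0) + 1))) * norm (y - x0)"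
      by (intro mult_right_mono) (auto simp: l_def)
    also have "\<dots> < e / 2"
    proof -
      have "(e / (2 * (norm (y - x0) + 1))) * norm (y - x0) = (e/2) * (norm (y - x0) / (norm (y - x0) + 1))"
        by (simp add: field_simps)
      also have "\<dots> < (e/2) * 1"
      proof -
        have "norm (y - x0) / (norm (y - x0) + 1) < 1"
          by (subst divide_less_eq_1_pos) (auto intro: add_nonneg_pos)
        then show ?thesis using e by (intro mult_strict_left_mono) auto
      qed
      finally show ?thesis by simp
    qed
    finally show "y \<in> (\<Union>q\<in>{q. u q < ereal t}. ball q (e/2))" using uq by (auto simp: dist_commute)
  qed
  obtain Q where Q: "Q \<subseteq> {q. u q < ereal t}" "finite Q" "K \<subseteq> (\<Union>q\<in>Q. ball q (e/2))"
    using compactE_image[OF cK _ cov] by blast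
  have "\<forall>q\<in>Q. \<exists>xs. eventually (\<lambda>k. us k (xs k) < ereal t \<and> dist (xs k) q < e/2) sequentially"
  proof
    fix q assume "q \<in> Q"
    then have "u q < ereal t" using Q(1) by auto
    from recov_lt[OF this, of "e/2"] e
    show "\<exists>xs. eventually (\<lambda>k. us k (xs k) < ereal t \<and> dist (xs k) q < e/2) sequentially" by auto
  qed
  then obtain X where X: "\<And>q. q \<in> Q \<Longrightarrow> eventually (\<lambda>k. us k (X q k) < ereal t \<and> dist (X q k) q < e/2) sequentially"
    by (metis bchoice)
  have "eventually (\<lambda>k. \<forall>q\<in>Q. us k (X q k) < ereal t \<and> dist (X q k) q < e/2) sequentially"
    using X Q(2) by (simp add: eventually_ball_finite)
  then show ?thesis
  proof eventually_elim
    case (elim k)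
    show ?case
    proof safe
      fix y assume "u y \<le> ereal t"
      then have "y \<in> K" by (simp add: K_def)
      then obtain q where q: "q \<in> Q" "dist q y < e/2" using Q(3) by auto
      have "dist (X q k) y \<le> dist (X q k) q + dist q y" by (rule dist_triangle)
      also have "\<dots> < e" using elim q by auto
      finally show "\<exists>x. us k x \<le> ereal t \<and> dist x y < e" using elim q by (intro exI[of _ "X q k"]) auto
    qed
  qed
qed

end
end

lemma hd_le:
  assumes "K \<noteq> {}" "L \<noteq> {}" "\<And>x. x \<in> K \<Longrightarrow> \<exists>y\<in>L. dist x y \<le> e" "\<And>y. y \<in> L \<Longrightarrow> \<exists>x\<in>K. dist y x \<le> e"
  shows "hausdorff_dist K L \<le> e"
proof -
  have "(SUP x\<in>K. infdist x L) \<le> e"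
  proof (rule cSUP_least[OF assms(1)])
    fix x assume "x \<in> K"
    then obtain y where "y \<in> L" "dist x y \<le> e" using assms(3) by blast
    then show "infdist x L \<le> e" using infdist_le[of y L x] by linarith
  qed
  moreover have "(SUP y\<in>L. infdist y K) \<le> e"
  proof (rule cSUP_least[OF assms(2)])
    fix y assume "y \<in> L"
    then obtain x where "x \<in> K" "dist y x \<le> e" using assms(4) by blast
    then show "infdist y K \<le> e" using infdist_le[of x K y] by linarith
  qed
  ultimately show ?thesis by (simp add: hausdorff_dist_def)
qed

lemma hat_dH_bound:
  fixes K L :: "'a::real_normed_vector set"
  assumes R: "R \<ge> 0" and K: "\<And>x. x \<in> K \<Longrightarrow> norm x \<le> R" and L: "\<And>x. x \<in> L \<Longrightarrow> norm x \<le> R"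
  shows "hat_dH K L \<le> 1 + 2 * R"
proof -
  have one: "hausdorff_dist A {0} \<le> R" if "A \<noteq> {}" "\<And>x. x \<in> A \<Longrightarrow> norm x \<le> R" for A :: "'a set"
  proof (rule hd_le)
    show "\<exists>y\<in>{0}. dist x y \<le> R" if "x \<in> A" for x using that(1) \<open>\<And>x. x \<in> A \<Longrightarrow> norm x \<le> R\<close> by (auto simp: dist_norm)
    show "\<exists>x\<in>A. dist y x \<le> R" if "y \<in> {0}" for y
      using that \<open>A \<noteq> {}\<close> \<open>\<And>x. x \<in> A \<Longrightarrow> norm x \<le> R\<close> by (auto simp: dist_norm)
  qed (use that in auto)
  show ?thesis
  proof (cases "K = {}"; cases "L = {}")
    assume "K \<noteq> {}" "L \<noteq> {}"
    have "hausdorff_dist K L \<le> 2 * R"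
    proof (rule hd_le[OF \<open>K \<noteq> {}\<close> \<open>L \<noteq> {}\<close>])
      fix x assume x: "x \<in> K"
      obtain y where y: "y \<in> L" using \<open>L \<noteq> {}\<close> by blast
      have "dist x y \<le> norm x + norm y" by (simp add: dist_norm norm_triangle_ineq4)
      then show "\<exists>y\<in>L. dist x y \<le> 2 * R" using K[OF x] L[OF y] y by (intro bexI[of _ y]) auto
    next
      fix y assume y: "y \<in> L"
      obtain x where x: "x \<in> K" using \<open>K \<noteq> {}\<close> by blast
      have "dist y x \<le> norm y + norm x" by (simp add: dist_norm norm_triangle_ineq4)
      then show "\<exists>x\<in>K. dist y x \<le> 2 * R" using K[OF x] L[OF y] x by (intro bexI[of _ x]) auto
    qed
    then show ?thesis using \<open>K \<noteq> {}\<close> \<open>L \<noteq> {}\<close> by (simp add: hat_dH_def)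
  qed (use one[of K] one[of L] K L R in \<open>auto simp: hat_dH_def\<close>)
qed

context
  fixes \<zeta> :: "real \<Rightarrow> real"
  assumes zc: "continuous_on UNIV \<zeta>" and z0: "\<And>t. \<zeta> t \<ge> 0" and zm: "antimono \<zeta>"
    and zi: "(\<integral>\<^sup>+ t. ennreal (\<zeta> t) * indicator {0..} t \<partial>lborel) < \<infinity>"
begin

lemma zeta_small: assumes s: "s > 0" shows "\<exists>t. \<zeta> t < s"
proof (rule ccontr)
  assume "\<not> ?thesis"
  then have zs: "\<And>t. s \<le> \<zeta> t" by (simp add: not_less)
  obtain c where c: "(\<integral>\<^sup>+ t. ennreal (\<zeta> t) * indicator {0..} t \<partial>lborel) = ennreal c" "c \<ge> 0"
    using zi by (cases "(\<integral>\<^sup>+ t. ennreal (\<zeta> t) * indicator {0..} t \<partial>lborel)") (auto simp: top_unique)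
  have "ennreal (s * real n) \<le> ennreal c" for n :: nat
  proof -
    have "ennreal (s * real n) = (\<integral>\<^sup>+ t. ennreal s * indicator {0..real n} t \<partial>lborel)"
      using s by (simp add: ennreal_mult nn_integral_cmult_indicator)
    also have "\<dots> \<le> (\<integral>\<^sup>+ t. ennreal (\<zeta> t) * indicator {0..} t \<partial>lborel)"
      by (intro nn_integral_mono) (auto simp: zs ennreal_leI split: split_indicator)
    finally show ?thesis using c by simp
  qed
  then have "s * real n \<le> c" for n using c(2) by (metis ennreal_le_iff)
  moreover obtain n :: nat where "c / s < real n" using reals_Archimedean2 by blast
  ultimately show False using s by (simp add: field_simps) (metis not_le)
qed

lemma zeta_tau:
  assumes s: "s > 0" and ex: "\<exists>t. s \<le> \<zeta> t"
  shows "\<exists>\<tau>. \<forall>t. s \<le> \<zeta> t \<longleftrightarrow> t \<le> \<tau>"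
proof -
  define A where "A = {t. s \<le> \<zeta> t}"
  obtain t0 where t0: "\<zeta> t0 < s" using zeta_small[OF s] by blast
  have ub: "a \<le> t0" if "a \<in> A" for a
  proof (rule ccontr)
    assume "\<not> a \<le> t0"
    then have "\<zeta> a \<le> \<zeta> t0" using zm by (simp add: antimonoD)
    then show False using that t0 by (simp add: A_def)
  qed
  have bdd: "bdd_above A" using ub by (auto simp: bdd_above_def)
  have ne: "A \<noteq> {}" using ex by (simp add: A_def)
  have cl: "closed A" unfolding A_def by (intro closed_Collect_le continuous_on_const zc)
  have SA: "Sup A \<in> A" by (rule closed_contains_Sup[OF ne bdd cl])
  have "s \<le> \<zeta> t \<longleftrightarrow> t \<le> Sup A" for t
  proof
    assume "s \<le> \<zeta> t" then show "t \<le> Sup A" using bdd by (intro cSup_upper) (auto simp: A_def)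
  next
    assume "t \<le> Sup A"
    then have "\<zeta> (Sup A) \<le> \<zeta> t" using zm by (simp add: antimonoD)
    then show "s \<le> \<zeta> t" using SA by (simp add: A_def)
  qed
  then show ?thesis by blast
qed

lemma superlevel_tau:
  assumes v: "v \<in> Conv_coe" and s: "s > 0" and tau: "\<And>t. s \<le> \<zeta> t \<longleftrightarrow> t \<le> \<tau>"
  shows "superlevel \<zeta> v s = {x. v x \<le> ereal \<tau>}"
proof -
  have "s \<le> zeta_ext \<zeta> (v x) \<longleftrightarrow> v x \<le> ereal \<tau>" for x
  proof (cases "v x")
    case (real r) then show ?thesis using tau by (simp add: zeta_ext_def)
  next
    case PInf then show ?thesis using s by (simp add: zeta_ext_def)
  next
    case MInf then show ?thesis using cc_not_minf[OF v] by simp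
  qed
  then show ?thesis by (simp add: superlevel_def)
qed

lemma superlevel_empty:
  assumes s: "s > 0" and none: "\<not> (\<exists>t. s \<le> \<zeta> t)"
  shows "superlevel \<zeta> v s = {}"
  using s none by (auto simp: superlevel_def zeta_ext_def not_le split: if_splits)

lemma tau_eq:
  assumes tau: "\<And>t. s \<le> \<zeta> t \<longleftrightarrow> t \<le> m"
  shows "s = \<zeta> m"
proof -
  have "isCont \<zeta> m" using zc by (simp add: continuous_on_eq_continuous_at)
  moreover have "(\<lambda>n. m + inverse (real (Suc n))) \<longlonglongrightarrow> m"
    using tendsto_add[OF tendsto_const LIMSEQ_inverse_real_of_nat, of m] by simp
  ultimately have "(\<lambda>n. \<zeta> (m + inverse (real (Suc n)))) \<longlonglongrightarrow> \<zeta> m" by (rule isCont_tendsto_compose)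
  moreover have "\<zeta> (m + inverse (real (Suc n))) \<le> s" for n
  proof -
    have "\<not> m + inverse (real (Suc n)) \<le> m" by simp
    then show ?thesis using tau[of "m + inverse (real (Suc n))"] by simp
  qed
  ultimately have "\<zeta> m \<le> s" by (intro LIMSEQ_le_const2) auto
  moreover have "s \<le> \<zeta> m" using tau by simp
  ultimately show ?thesis by simp
qed

end

context
  fixes \<zeta> :: "real \<Rightarrow> real"
  assumes zc: "continuous_on UNIV \<zeta>" and z0: "\<And>t. \<zeta> t \<ge> 0"
begin

definition rfun :: "real \<Rightarrow> ennreal" where
  "rfun s = (\<integral>\<^sup>+ t. indicator {p::real\<times>real. 0 < fst p \<and> 0 \<le> snd p \<and> fst p \<le> \<zeta> (snd p)} (s, t) \<partial>lborel)"

lemma zeta_meas[measurable]: "\<zeta> \<in> borel_measurable borel"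
  by (rule borel_measurable_continuous_onI[OF zc])

lemma S_meas: "(\<lambda>p. indicator {p::real\<times>real. 0 < fst p \<and> 0 \<le> snd p \<and> fst p \<le> \<zeta> (snd p)} p :: ennreal)
   \<in> borel_measurable (lborel \<Otimes>\<^sub>M lborel)"
  by measurable

lemma rfun_meas: "rfun \<in> borel_measurable lborel"
  unfolding rfun_def using S_meas by measurable

lemma rfun_int: "(\<integral>\<^sup>+ s. rfun s \<partial>lborel) = (\<integral>\<^sup>+ t. ennreal (\<zeta> t) * indicator {0..} t \<partial>lborel)"
proof -
  have "(\<integral>\<^sup>+ s. rfun s \<partial>lborel) = (\<integral>\<^sup>+ t. (\<integral>\<^sup>+ s. indicator {p::real\<times>real. 0 < fst p \<and> 0 \<le> snd p \<and> fst p \<le> \<zeta> (snd p)} (s, t) \<partial>lborel) \<partial>lborel)"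
    unfolding rfun_def
    by (rule lborel_pair.Fubini'[symmetric]) (use S_meas in simp)
  also have "\<dots> = (\<integral>\<^sup>+ t. ennreal (\<zeta> t) * indicator {0..} t \<partial>lborel)"
  proof (rule nn_integral_cong)
    fix t :: real
    show "(\<integral>\<^sup>+ s. indicator {p::real\<times>real. 0 < fst p \<and> 0 \<le> snd p \<and> fst p \<le> \<zeta> (snd p)} (s, t) \<partial>lborel)
       = ennreal (\<zeta> t) * indicator {0..} t"
    proof (cases "0 \<le> t")
      case True
      have "(\<lambda>s. indicator {p::real\<times>real. 0 < fst p \<and> 0 \<le> snd p \<and> fst p \<le> \<zeta> (snd p)} (s, t) :: ennreal)
          = indicator {0<..\<zeta> t}" using True by (auto simp: indicator_def)
      then show ?thesis using True z0[of t] by simp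
    next
      case False
      have "(\<lambda>s. indicator {p::real\<times>real. 0 < fst p \<and> 0 \<le> snd p \<and> fst p \<le> \<zeta> (snd p)} (s, t) :: ennreal)
          = (\<lambda>_. 0)" using False by (auto simp: indicator_def)
      then show ?thesis using False by simp
    qed
  qed
  finally show ?thesis .
qed

lemma rfun_val:
  assumes s: "s > 0" and tau: "\<And>t. s \<le> \<zeta> t \<longleftrightarrow> t \<le> \<tau>" and t0: "\<tau> \<ge> 0"
  shows "rfun s = ennreal \<tau>"
proof -
  have "(\<lambda>t. indicator {p::real\<times>real. 0 < fst p \<and> 0 \<le> snd p \<and> fst p \<le> \<zeta> (snd p)} (s, t) :: ennreal)
      = indicator {0..\<tau>}" using s tau by (auto simp: indicator_def)
  then show ?thesis using t0 by (simp add: rfun_def)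
qed

end

lemma epi_const: assumes "u \<in> Conv_coe" shows "epi_converges (\<lambda>k. u) u"
proof -
  have A: "\<And>x xs. xs \<longlonglongrightarrow> x \<Longrightarrow> u x \<le> liminf (\<lambda>k. u (xs k))" by (rule cc_lsc[OF assms])
  have B: "\<And>x. (\<lambda>k::nat. x) \<longlonglongrightarrow> x \<and> limsup (\<lambda>k::nat. u x) \<le> u x" by (simp add: Limsup_const)
  show ?thesis unfolding epi_converges_def using A B by blast
qed

lemma ennreal_tendsto0:
  assumes "\<And>e. e > 0 \<Longrightarrow> eventually (\<lambda>k. h k \<le> e) sequentially"
  shows "(\<lambda>k. ennreal (h k)) \<longlonglongrightarrow> 0"
proof -
  have "(\<lambda>k. max 0 (h k)) \<longlonglongrightarrow> 0"
  proof (rule tendstoI)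
    fix e :: real assume e: "e > 0"
    show "eventually (\<lambda>k. dist (max 0 (h k)) 0 < e) sequentially"
    proof -
      have "e/2 > 0" using e by simp
      from assms[OF this] show ?thesis by eventually_elim (use e in auto)
    qed
  qed
  then have "(\<lambda>k. ennreal (max 0 (h k))) \<longlonglongrightarrow> ennreal 0" by (rule tendsto_ennrealI)
  then show ?thesis by (simp add: ennreal_max_0)
qed

theorem lemma5p6:
  fixes \<zeta> :: "real \<Rightarrow> real"
    and us :: "nat \<Rightarrow> 'a::euclidean_space \<Rightarrow> ereal"
    and u :: "'a \<Rightarrow> ereal"
  assumes "continuous_on UNIV \<zeta>"
    and "\<And>t. \<zeta> t \<ge> 0"
    and "antimono \<zeta>"
    and "(\<integral>\<^sup>+ t. ennreal (\<zeta> t) * indicator {0..} t \<partial>lborel) < \<infinity>"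
    and "\<And>k. us k \<in> Conv_coe"
    and "u \<in> Conv_coe"
    and "epi_converges us u"
  shows "(\<lambda>k. delta_H \<zeta> (us k) u) \<longlonglongrightarrow> 0"
proof -
  note zc = assms(1) and z0 = assms(2) and zm = assms(3) and zi = assms(4)
  interpret E: epi_set us u using assms(5-7) by unfold_locales auto
  interpret E0: epi_set "\<lambda>k. u" u using assms(6) epi_const[OF assms(6)] by unfold_locales auto
  obtain x0 m where x0m: "u x0 = ereal m" and mmin: "\<And>x. ereal m \<le> u x" using cc_min[OF assms(6)] by blast
  obtain N C where C0: "C \<ge> 0" and NC: "\<And>k x t. k \<ge> N \<Longrightarrow> us k x \<le> ereal t \<Longrightarrow> norm x \<le> C * (1 + \<bar>t\<bar>) \<and> m - 1 < t"
    using E.growth[OF x0m mmin] by blast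
  obtain N' :: nat and C' where C'0: "C' \<ge> 0" and NC': "\<And>x t. u x \<le> ereal t \<Longrightarrow> norm x \<le> C' * (1 + \<bar>t\<bar>)"
    using E0.growth[OF x0m mmin] by blast
  define C2 where "C2 = max C C'"
  define L where "L = m - 1"
  have C20: "C2 \<ge> 0" using C0 by (simp add: C2_def)
  define f where "f k s = ennreal (hat_dH (superlevel \<zeta> (us k) s) (superlevel \<zeta> u s)) * indicator {0..} s" for k s
  define A where "A = 1 + 2 * C2 * (1 + \<bar>L\<bar>)"
  define G where "G s = ennreal A * indicator {0..\<zeta> L} s + ennreal (2 * C2) * rfun \<zeta> s" for s
  have Gm: "G \<in> borel_measurable lborel"
  proof -
    have [measurable]: "rfun \<zeta> \<in> borel_measurable lborel" by (rule rfun_meas[OF zc z0])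
    show ?thesis unfolding G_def[abs_def] by measurable
  qed
  have Gi: "(\<integral>\<^sup>+ s. G s \<partial>lborel) < \<infinity>"
  proof -
    have rm: "rfun \<zeta> \<in> borel_measurable lborel" by (rule rfun_meas[OF zc z0])
    have "(\<integral>\<^sup>+ s. G s \<partial>lborel) = (\<integral>\<^sup>+ s. ennreal A * indicator {0..\<zeta> L} s \<partial>lborel) + (\<integral>\<^sup>+ s. ennreal (2 * C2) * rfun \<zeta> s \<partial>lborel)"
      unfolding G_def by (rule nn_integral_add) (use rm in auto)
    also have "(\<integral>\<^sup>+ s. ennreal A * indicator {0..\<zeta> L} s \<partial>lborel) = ennreal A * ennreal (\<zeta> L)"
      using z0[of L] by (subst nn_integral_cmult_indicator) auto
    also have "(\<integral>\<^sup>+ s. ennreal (2 * C2) * rfun \<zeta> s \<partial>lborel) = ennreal (2 * C2) * (\<integral>\<^sup>+ s. rfun \<zeta> s \<partial>lborel)"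
      by (rule nn_integral_cmult[OF rm])
    also have "(\<integral>\<^sup>+ s. rfun \<zeta> s \<partial>lborel) = (\<integral>\<^sup>+ t. ennreal (\<zeta> t) * indicator {0..} t \<partial>lborel)"
      by (rule rfun_int[OF zc z0])
    finally have eq: "(\<integral>\<^sup>+ s. G s \<partial>lborel) = ennreal A * ennreal (\<zeta> L) + ennreal (2 * C2) * (\<integral>\<^sup>+ t. ennreal (\<zeta> t) * indicator {0..} t \<partial>lborel)" .
    have "ennreal A * ennreal (\<zeta> L) < \<infinity>" by (simp add: ennreal_mult_less_top)
    moreover have "ennreal (2 * C2) * (\<integral>\<^sup>+ t. ennreal (\<zeta> t) * indicator {0..} t \<partial>lborel) < \<infinity>"
      using zi by (simp add: ennreal_mult_less_top)
    ultimately show ?thesis unfolding eq by (simp add: ennreal_add_less_top)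
  qed
  have sup_u_tau: "superlevel \<zeta> u s = {x. u x \<le> ereal \<tau>}" and sup_us_tau: "superlevel \<zeta> (us k) s = {x. us k x \<le> ereal \<tau>}"
    if "s > 0" "\<And>t. s \<le> \<zeta> t \<longleftrightarrow> t \<le> \<tau>" for s \<tau> k
    using superlevel_tau[OF zc z0 zm zi assms(6) that] superlevel_tau[OF zc z0 zm zi assms(5) that] by auto
  have dom: "AE s in lborel. f k s \<le> G s" if k: "k \<ge> N" for k
    using AE_lborel_singleton[of 0]
  proof eventually_elim
    case (elim s)
    show ?case
    proof (cases "s > 0")
      case False then show ?thesis using elim by (simp add: f_def)
    next
      case s: True
      show ?thesis
      proof (cases "\<exists>t. s \<le> \<zeta> t")
        case False
        then show ?thesis using superlevel_empty[OF zc z0 zm zi s False, of "us k"] superlevel_empty[OF zc z0 zm zi s False, of u] by (simp add: f_def hat_dH_def)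
      next
        case True
        obtain \<tau> where tau: "\<And>t. s \<le> \<zeta> t \<longleftrightarrow> t \<le> \<tau>" using zeta_tau[OF zc z0 zm zi s True] by blast
        note S = sup_u_tau[OF s tau] sup_us_tau[OF s tau, of k]
        show ?thesis
        proof (cases "L < \<tau>")
          case False
          have "{x. us k x \<le> ereal \<tau>} = {}" using NC[OF k] False by (force simp: L_def)
          moreover have "{x. u x \<le> ereal \<tau>} = {}"
          proof -
            have "\<not> u x \<le> ereal \<tau>" for x
            proof
              assume "u x \<le> ereal \<tau>"
              with mmin[of x] have "ereal m \<le> ereal \<tau>" by (rule order.trans)
              then show False using False by (simp add: L_def)
            qed
            then show ?thesis by auto
          qed
          ultimately show ?thesis using S by (simp add: f_def hat_dH_def)
        next
          case Lt: True
          have "hat_dH {x. us k x \<le> ereal \<tau>} {x. u x \<le> ereal \<tau>} \<le> 1 + 2 * (C2 * (1 + \<bar>\<tau>\<bar>))"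
          proof (rule hat_dH_bound)
            show "0 \<le> C2 * (1 + \<bar>\<tau>\<bar>)" using C20 by simp
            show "norm x \<le> C2 * (1 + \<bar>\<tau>\<bar>)" if "x \<in> {x. us k x \<le> ereal \<tau>}" for x
            proof -
              have "C * (1 + \<bar>\<tau>\<bar>) \<le> C2 * (1 + \<bar>\<tau>\<bar>)" by (intro mult_right_mono) (auto simp: C2_def)
              then show ?thesis using NC[OF k, of x \<tau>] that by simp
            qed
            show "norm x \<le> C2 * (1 + \<bar>\<tau>\<bar>)" if "x \<in> {x. u x \<le> ereal \<tau>}" for x
            proof -
              have "C' * (1 + \<bar>\<tau>\<bar>) \<le> C2 * (1 + \<bar>\<tau>\<bar>)" by (intro mult_right_mono) (auto simp: C2_def)
              then show ?thesis using NC'[of x \<tau>] that by simp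
            qed
          qed
          also have "\<dots> \<le> A + 2 * C2 * max \<tau> 0"
          proof -
            have "\<bar>\<tau>\<bar> \<le> \<bar>L\<bar> + max \<tau> 0" using Lt by linarith
            then have "2 * C2 * (1 + \<bar>\<tau>\<bar>) \<le> 2 * C2 * (1 + \<bar>L\<bar> + max \<tau> 0)" using C20 by (intro mult_left_mono) auto
            then show ?thesis by (simp add: A_def algebra_simps)
          qed
          finally have hb: "hat_dH {x. us k x \<le> ereal \<tau>} {x. u x \<le> ereal \<tau>} \<le> A + 2 * C2 * max \<tau> 0" .
          have A0: "A \<ge> 0" using C20 by (simp add: A_def)
          have ind1: "indicator {0..\<zeta> L} s = (1::ennreal)"
          proof -
            have "s \<le> \<zeta> \<tau>" using tau by simp
            moreover have "\<zeta> \<tau> \<le> \<zeta> L" using zm Lt by (simp add: antimonoD)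
            ultimately show ?thesis using s by (simp add: indicator_def)
          qed
          have rb: "ennreal (max \<tau> 0) \<le> rfun \<zeta> s"
          proof (cases "\<tau> \<ge> 0")
            case True then show ?thesis using rfun_val[OF zc z0 s tau True] by simp
          next
            case False then show ?thesis by simp
          qed
          have "f k s = ennreal (hat_dH {x. us k x \<le> ereal \<tau>} {x. u x \<le> ereal \<tau>})"
            using S s by (simp add: f_def)
          also have "\<dots> \<le> ennreal (A + 2 * C2 * max \<tau> 0)" by (rule ennreal_leI[OF hb])
          also have "\<dots> = ennreal A + ennreal (2 * C2) * ennreal (max \<tau> 0)"
            using A0 C20 by (simp add: ennreal_mult ennreal_plus)
          also have "\<dots> \<le> G s" unfolding G_def using ind1 rb by (simp add: mult_left_mono)
          finally show ?thesis .
        qed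
      qed
    qed
  qed
  have lim: "AE s in lborel. (\<lambda>k. f k s) \<longlonglongrightarrow> 0"
    using AE_conjI[OF AE_lborel_singleton[of 0] AE_lborel_singleton[of "\<zeta> m"]]
  proof eventually_elim
    case (elim s)
    show ?case
    proof (cases "s > 0")
      case False then show ?thesis using elim by (simp add: f_def)
    next
      case s: True
      show ?thesis
      proof (cases "\<exists>t. s \<le> \<zeta> t")
        case False
        have "f k s = 0" for k using superlevel_empty[OF zc z0 zm zi s False, of "us k"] superlevel_empty[OF zc z0 zm zi s False, of u] by (simp add: f_def hat_dH_def)
        then show ?thesis by simp
      next
        case True
        obtain \<tau> where tau: "\<And>t. s \<le> \<zeta> t \<longleftrightarrow> t \<le> \<tau>" using zeta_tau[OF zc z0 zm zi s True] by blast
        note S = sup_u_tau[OF s tau] sup_us_tau[OF s tau]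
        have fk: "f k s = ennreal (hat_dH {x. us k x \<le> ereal \<tau>} {x. u x \<le> ereal \<tau>})" for k
          using S s by (simp add: f_def)
        consider "\<tau> < m" | "\<tau> = m" | "m < \<tau>" by linarith
        then show ?thesis
        proof cases
          case 1
          have Eu: "{x. u x \<le> ereal \<tau>} = {}"
          proof -
            have "\<not> u x \<le> ereal \<tau>" for x
            proof
              assume "u x \<le> ereal \<tau>"
              with mmin[of x] have "ereal m \<le> ereal \<tau>" by (rule order.trans)
              then show False using 1 by simp
            qed
            then show ?thesis by auto
          qed
          have "eventually (\<lambda>k. {x. us k x \<le> ereal \<tau>} = {}) sequentially"
            using E.empty_below[OF x0m mmin 1] by eventually_elim auto
          then have "eventually (\<lambda>k. f k s = 0) sequentially"
            unfolding fk by eventually_elim (simp add: hat_dH_def Eu)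
          then show ?thesis by (rule tendsto_eventually)
        next
          case 2
          then have "s = \<zeta> m" using tau_eq[OF zc z0 zm zi, of s m] tau by simp
          then show ?thesis using elim by simp
        next
          case 3
          show ?thesis unfolding fk
          proof (rule ennreal_tendsto0)
            fix e :: real assume e: "e > 0"
            show "eventually (\<lambda>k. hat_dH {x. us k x \<le> ereal \<tau>} {x. u x \<le> ereal \<tau>} \<le> e) sequentially"
              using E.partA[OF x0m mmin e, of \<tau>] E.partB[OF x0m mmin e 3]
            proof eventually_elim
              case (elim k)
              have "x0 \<in> {x. u x \<le> ereal \<tau>}" using x0m 3 by simp
              then have ne1: "{x. u x \<le> ereal \<tau>} \<noteq> {}" by blast
              then have ne2: "{x. us k x \<le> ereal \<tau>} \<noteq> {}" using elim(2) by blast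
              have "hausdorff_dist {x. us k x \<le> ereal \<tau>} {x. u x \<le> ereal \<tau>} \<le> e"
              proof (rule hd_le[OF ne2 ne1])
                fix x assume "x \<in> {x. us k x \<le> ereal \<tau>}"
                then show "\<exists>y\<in>{x. u x \<le> ereal \<tau>}. dist x y \<le> e" using elim(1) by (force intro: less_imp_le)
              next
                fix y assume "y \<in> {x. u x \<le> ereal \<tau>}"
                then obtain x where "us k x \<le> ereal \<tau>" "dist x y < e" using elim(2) by blast
                then show "\<exists>x\<in>{x. us k x \<le> ereal \<tau>}. dist y x \<le> e" by (auto simp: dist_commute intro!: bexI[of _ x])
              qed
              moreover have "hat_dH {x. us k x \<le> ereal \<tau>} {x. u x \<le> ereal \<tau>} = hausdorff_dist {x. us k x \<le> ereal \<tau>} {x. u x \<le> ereal \<tau>}"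
                using ne1 ne2 unfolding hat_dH_def by presburger
              ultimately show ?case by simp
            qed
          qed
        qed
      qed
    qed
  qed
  have "(\<lambda>k. integral\<^sup>N lborel (f k)) \<longlonglongrightarrow> 0"
    by (rule dc_nonmeas[OF Gm Gi dom lim])
  moreover have "(\<lambda>k. delta_H \<zeta> (us k) u) = (\<lambda>k. integral\<^sup>N lborel (f k))"
    by (simp add: delta_H_def f_def[abs_def])
  ultimately show ?thesis by simp
qed

end
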